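(* Let $\mathcal{A}$ be a unital algebra over a field $F$ with $\operatorname{char}(F)\neq 2$, let $f:\mathcal{A}\to\mathcal{A}$ be linear and let $\alpha=\tfrac12 f(1)$. Then (a) $f\in\operatorname{QJCent}(\mathcal{A})$ if and only if $f(x)=\alpha\circ x$ for all $x\in\mathcal{A}$ and $\alpha\in Z_Q(\mathcal{A})$; (b) $f\in\operatorname{JCent}(\mathcal{A})$ if and only if $f(x)=\alpha\circ x$ for all $x\in\mathcal{A}$ and $\alpha\in Z_J(\mathcal{A})$.
   Context: $x\circ y=xy+yx$, $[x,y]=xy-yx$. $\operatorname{QJCent}(\mathcal{A})$ is the set of linear $f:\mathcal{A}\to\mathcal{A}$ with $f(x)\circ y=x\circ f(y)$ for all $x,y$; $\operatorname{JCent}(\mathcal{A})$ is the set of linear $f$ with $f(x\circ y)=f(x)\circ y$ for all $x,y$. $Z_J(\mathcal{A})=\{a\in\mathcal{A}: [[a,x],y]=0\ \forall x,y\in\mathcal{A}\}$ and $Z_Q(\mathcal{A})=\{a\in\mathcal{A}: [a,[x,y]]=0\ \forall x,y\in\mathcal{A}\}$. *)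

theory Defs
  imports Complex_Main
begin

definition jprod :: "'a::ring \<Rightarrow> 'a \<Rightarrow> 'a" (infixl "\<circ>\<^sub>J" 70) where
  "x \<circ>\<^sub>J y = x * y + y * x"

definition comm :: "'a::ring \<Rightarrow> 'a \<Rightarrow> 'a" where
  "comm x y = x * y - y * x"

definition unital_algebra :: "('k::field \<Rightarrow> 'a::ring_1 \<Rightarrow> 'a) \<Rightarrow> bool" where
  "unital_algebra scale \<longleftrightarrow> Vector_Spaces.vector_space scale \<and>
     (\<forall>c x y. scale c (x * y) = scale c x * y \<and> scale c (x * y) = x * scale c y)"

definition QJCent :: "('k::field \<Rightarrow> 'a::ring_1 \<Rightarrow> 'a) \<Rightarrow> ('a \<Rightarrow> 'a) set" where
  "QJCent scale = {f. Vector_Spaces.linear scale scale f \<and> (\<forall>x y. f x \<circ>\<^sub>J y = x \<circ>\<^sub>J f y)}"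

definition JCent :: "('k::field \<Rightarrow> 'a::ring_1 \<Rightarrow> 'a) \<Rightarrow> ('a \<Rightarrow> 'a) set" where
  "JCent scale = {f. Vector_Spaces.linear scale scale f \<and> (\<forall>x y. f (x \<circ>\<^sub>J y) = f x \<circ>\<^sub>J y)}"

definition Z_J :: "'a::ring set" where
  "Z_J = {a. \<forall>x y. comm (comm a x) y = 0}"

definition Z_Q :: "'a::ring set" where
  "Z_Q = {a. \<forall>x y. comm a (comm x y) = 0}"

end

theory Submission
  imports Defs
begin

lemma half_lemma:
  fixes scale :: "'k::field \<Rightarrow> 'a::ring_1 \<Rightarrow> 'a"
  assumes vs: "Vector_Spaces.vector_space scale" and char: "(2::'k::field) \<noteq> 0"
  shows "scale (1/2) (v + v) = (v::'a::ring_1)"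
proof -
  interpret vector_space scale by (rule vs)
  have "scale (1+1) v = v + v" by (simp only: scale_left_distrib scale_one)
  hence "v + v = scale 2 v" by (simp only: one_add_one)
  then have "scale (1/2) (v + v) = scale (1/2 * 2) v" by simp
  thus ?thesis using char by simp
qed

lemma jprod_scale:
  assumes alg: "unital_algebra scale"
  shows "scale (c::'k::field) a \<circ>\<^sub>J x = scale c (a \<circ>\<^sub>J (x::'a::ring_1))"
proof -
  interpret vector_space scale using alg by (simp add: unital_algebra_def)
  have m: "scale c (p * q) = scale c p * q \<and> scale c (p * q) = p * scale c q" for p q
    using alg unfolding unital_algebra_def by blast
  show ?thesis unfolding jprod_def
    by (metis m scale_right_distrib)
qed

lemma idQ: "((a::'a::ring) \<circ>\<^sub>J x) \<circ>\<^sub>J y - x \<circ>\<^sub>J (a \<circ>\<^sub>J y) = comm a (comm x y)"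
  by (simp add: jprod_def comm_def algebra_simps)

lemma idJ: "(a::'a::ring) \<circ>\<^sub>J (x \<circ>\<^sub>J y) - (a \<circ>\<^sub>J x) \<circ>\<^sub>J y = comm (comm a y) x"
  by (simp add: jprod_def comm_def algebra_simps)

theorem theorem3p1:
  fixes scale :: "'k::field \<Rightarrow> 'a::ring_1 \<Rightarrow> 'a"
    and f :: "'a \<Rightarrow> 'a"
  assumes alg: "unital_algebra scale"
    and char: "(2::'k) \<noteq> 0"
    and lin: "Vector_Spaces.linear scale scale f"
  defines "\<alpha> \<equiv> scale (1/2) (f 1)"
  shows "(f \<in> QJCent scale \<longleftrightarrow> (\<forall>x. f x = \<alpha> \<circ>\<^sub>J x) \<and> \<alpha> \<in> Z_Q) \<and>
         (f \<in> JCent scale \<longleftrightarrow> (\<forall>x. f x = \<alpha> \<circ>\<^sub>J x) \<and> \<alpha> \<in> Z_J)"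
proof -
  have vs: "Vector_Spaces.vector_space scale" using alg by (simp add: unital_algebra_def)
  interpret Vector_Spaces.linear scale scale f by (rule lin)
  have key: "f x = \<alpha> \<circ>\<^sub>J x" if h: "f x + f x = f 1 \<circ>\<^sub>J x" for x
  proof -
    have "\<alpha> \<circ>\<^sub>J x = scale (1/2) (f 1 \<circ>\<^sub>J x)" unfolding \<alpha>_def by (rule jprod_scale[OF alg])
    also have "\<dots> = scale (1/2) (f x + f x)" using h by simp
    also have "\<dots> = f x" by (rule half_lemma[OF vs char])
    finally show ?thesis by simp
  qed
  have one: "1 \<circ>\<^sub>J y = y + y" for y :: 'a by (simp add: jprod_def)
  have Q: "f \<in> QJCent scale \<longleftrightarrow> (\<forall>x. f x = \<alpha> \<circ>\<^sub>J x) \<and> \<alpha> \<in> Z_Q"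
  proof
    assume "f \<in> QJCent scale"
    hence H: "\<And>x y. f x \<circ>\<^sub>J y = x \<circ>\<^sub>J f y" by (simp add: QJCent_def)
    have F: "\<forall>x. f x = \<alpha> \<circ>\<^sub>J x"
    proof
      fix x
      have "f x + f x = f x \<circ>\<^sub>J 1" by (simp add: jprod_def)
      also have "\<dots> = x \<circ>\<^sub>J f 1" by (rule H)
      also have "\<dots> = f 1 \<circ>\<^sub>J x" by (simp add: jprod_def add.commute)
      finally show "f x = \<alpha> \<circ>\<^sub>J x" by (rule key)
    qed
    have "comm \<alpha> (comm x y) = 0" for x y
      using idQ[of \<alpha> x y] H[of x y] F by simp
    thus "(\<forall>x. f x = \<alpha> \<circ>\<^sub>J x) \<and> \<alpha> \<in> Z_Q" using F by (simp add: Z_Q_def)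
  next
    assume A: "(\<forall>x. f x = \<alpha> \<circ>\<^sub>J x) \<and> \<alpha> \<in> Z_Q"
    have "f x \<circ>\<^sub>J y = x \<circ>\<^sub>J f y" for x y
      using idQ[of \<alpha> x y] A by (simp add: Z_Q_def)
    thus "f \<in> QJCent scale" using lin by (simp add: QJCent_def)
  qed
  have J: "f \<in> JCent scale \<longleftrightarrow> (\<forall>x. f x = \<alpha> \<circ>\<^sub>J x) \<and> \<alpha> \<in> Z_J"
  proof
    assume "f \<in> JCent scale"
    hence H: "\<And>x y. f (x \<circ>\<^sub>J y) = f x \<circ>\<^sub>J y" by (simp add: JCent_def)
    have F: "\<forall>x. f x = \<alpha> \<circ>\<^sub>J x"
    proof
      fix x
      have "f x + f x = f (1 \<circ>\<^sub>J x)" by (simp add: one add)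
      also have "\<dots> = f 1 \<circ>\<^sub>J x" by (rule H)
      finally show "f x = \<alpha> \<circ>\<^sub>J x" by (rule key)
    qed
    have "comm (comm \<alpha> y) x = 0" for x y
      using idJ[of \<alpha> x y] H[of x y] F by simp
    thus "(\<forall>x. f x = \<alpha> \<circ>\<^sub>J x) \<and> \<alpha> \<in> Z_J" using F by (simp add: Z_J_def)
  next
    assume A: "(\<forall>x. f x = \<alpha> \<circ>\<^sub>J x) \<and> \<alpha> \<in> Z_J"
    have "f (x \<circ>\<^sub>J y) = f x \<circ>\<^sub>J y" for x y
      using idJ[of \<alpha> x y] A by (simp add: Z_J_def)
    thus "f \<in> JCent scale" using lin by (simp add: JCent_def)
  qed
  show ?thesis using Q J by simp
qed

end
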